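(* Let $E$ be a Banach lattice whose dual space $E'$ is order continuous, and let $X$ be a Banach space. Then every Dunford-Pettis operator $T\colon E\to X$ is $uaw$-Dunford-Pettis.
   Context: All operators are bounded linear operators. A net $(x_\alpha)$ in a Banach lattice $E$ is $uaw$-convergent to $x\in E$ (written $x_\alpha\xrightarrow{uaw}x$) if for every $u\in E_+$ the net $|x_\alpha-x|\wedge u$ converges weakly to $0$. An operator $T\colon E\to X$ from a Banach lattice to a Banach space is Dunford-Pettis if it maps weakly null sequences to norm null sequences. It is $uaw$-Dunford-Pettis if for every norm bounded sequence $(x_n)$ in $E$ with $x_n\xrightarrow{uaw}0$ one has $\|T(x_n)\|\to 0$. *)

theory Defs
  imports "HOL-Analysis.Analysis"
begin

class banach_lattice = banach + ordered_real_vector + lattice +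
  assumes lattice_norm: "sup x (- x) \<le> sup y (- y) \<Longrightarrow> norm x \<le> norm y"

definition lmod :: "'a::banach_lattice \<Rightarrow> 'a" where
  "lmod x = sup x (- x)"

definition dual_le :: "('a::banach_lattice \<Rightarrow>\<^sub>L real) \<Rightarrow> ('a \<Rightarrow>\<^sub>L real) \<Rightarrow> bool" where
  "dual_le f g \<longleftrightarrow> (\<forall>x. 0 \<le> x \<longrightarrow> blinfun_apply f x \<le> blinfun_apply g x)"

text \<open>The dual E' has order continuous norm: every downward directed set D in E'
with infimum 0 (i.e. a net decreasing to 0) satisfies inf of norms = 0, i.e. the
decreasing net converges to 0 in norm.\<close>
definition dual_order_continuous :: "'a::banach_lattice itself \<Rightarrow> bool" where
  "dual_order_continuous _ \<longleftrightarrow>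
     (\<forall>D :: ('a \<Rightarrow>\<^sub>L real) set.
        D \<noteq> {} \<and>
        (\<forall>f\<in>D. \<forall>g\<in>D. \<exists>h\<in>D. dual_le h f \<and> dual_le h g) \<and>
        (\<forall>f\<in>D. dual_le 0 f) \<and>
        (\<forall>h. (\<forall>f\<in>D. dual_le h f) \<longrightarrow> dual_le h 0)
        \<longrightarrow> (\<forall>e>0. \<exists>f\<in>D. norm f < e))"

definition weakly_null :: "(nat \<Rightarrow> 'a::real_normed_vector) \<Rightarrow> bool" where
  "weakly_null x \<longleftrightarrow> (\<forall>f :: 'a \<Rightarrow>\<^sub>L real. (\<lambda>n. blinfun_apply f (x n)) \<longlonglongrightarrow> 0)"

definition uaw_null :: "(nat \<Rightarrow> 'a::banach_lattice) \<Rightarrow> bool" where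
  "uaw_null x \<longleftrightarrow> (\<forall>u. 0 \<le> u \<longrightarrow> weakly_null (\<lambda>n. inf (lmod (x n)) u))"

definition dunford_pettis :: "('a::banach_lattice \<Rightarrow>\<^sub>L 'b::banach) \<Rightarrow> bool" where
  "dunford_pettis T \<longleftrightarrow>
     (\<forall>x. weakly_null x \<longrightarrow> (\<lambda>n. norm (blinfun_apply T (x n))) \<longlonglongrightarrow> 0)"

definition uaw_dunford_pettis :: "('a::banach_lattice \<Rightarrow>\<^sub>L 'b::banach) \<Rightarrow> bool" where
  "uaw_dunford_pettis T \<longleftrightarrow>
     (\<forall>x. bounded (range x) \<and> uaw_null x \<longrightarrow> (\<lambda>n. norm (blinfun_apply T (x n))) \<longlonglongrightarrow> 0)"

end

theory Submission
  imports Defs "HOL-Library.Lattice_Algebras"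
begin

context banach_lattice begin
subclass lattice_ab_group_add ..
end

lemma lmod_nonneg: "0 \<le> lmod (x::'a::banach_lattice)"
proof -
  have "x \<le> lmod x" "- x \<le> lmod x" by (auto simp: lmod_def)
  hence "0 \<le> lmod x + lmod x" by (metis add_mono add.right_inverse)
  thus ?thesis by simp
qed

lemma sup_neg_pos: "0 \<le> (a::'a::banach_lattice) \<Longrightarrow> sup a (- a) = a"
  by (meson neg_le_0_iff_le order_trans sup.absorb1)

lemma norm_mono_pos:
  fixes a b :: "'a::banach_lattice"
  assumes "0 \<le> a" "a \<le> b" shows "norm a \<le> norm b"
proof -
  have "0 \<le> b" using assms by simp
  thus ?thesis using assms lattice_norm[of a b] by (simp add: sup_neg_pos)
qed

lemma norm_lmod: "norm (lmod (x::'a::banach_lattice)) = norm x"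
proof -
  have e: "sup (lmod x) (- lmod x) = sup x (- x)"
    using sup_neg_pos[OF lmod_nonneg] by (simp add: lmod_def)
  show ?thesis using lattice_norm[of "lmod x" x] lattice_norm[of x "lmod x"] e by simp
qed

lemma pprt_le_lmod: "pprt (x::'a::banach_lattice) \<le> lmod x"
  using lmod_nonneg[of x] by (auto simp: pprt_def lmod_def)

lemma neg_nprt_le_lmod: "- nprt (x::'a::banach_lattice) \<le> lmod x"
  using lmod_nonneg[of x] by (auto simp: nprt_def lmod_def neg_inf_eq_sup)

lemma norm_pprt_le: "norm (pprt (x::'a::banach_lattice)) \<le> norm x"
  using norm_mono_pos[OF zero_le_pprt pprt_le_lmod] norm_lmod by metis

lemma norm_nprt_le: "norm (nprt (x::'a::banach_lattice)) \<le> norm x"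
proof -
  have "0 \<le> - nprt x" by simp
  from norm_mono_pos[OF this neg_nprt_le_lmod] show ?thesis by (simp add: norm_lmod)
qed

lemma norm_nprt_le_dist:
  fixes L b :: "'a::banach_lattice"
  assumes "0 \<le> b" shows "norm (nprt L) \<le> norm (b - L)"
proof -
  have "- nprt L = sup (- L) 0" by (simp add: nprt_def neg_inf_eq_sup)
  also have "\<dots> \<le> sup (b - L) 0" using assms by (intro sup_mono) auto
  also have "\<dots> \<le> lmod (b - L)" using lmod_nonneg[of "b - L"] by (auto simp: lmod_def)
  finally have "norm (- nprt L) \<le> norm (lmod (b - L))"
    by (intro norm_mono_pos) auto
  thus ?thesis by (simp add: norm_lmod)
qed

lemma cone_closed:
  fixes X :: "nat \<Rightarrow> 'a::banach_lattice"
  assumes "X \<longlonglongrightarrow> L" "eventually (\<lambda>n. 0 \<le> X n) sequentially"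
  shows "0 \<le> L"
proof -
  have t: "(\<lambda>n. norm (X n - L)) \<longlonglongrightarrow> 0"
    using assms(1) by (simp add: LIM_zero_iff tendsto_norm_zero_iff)
  have "eventually (\<lambda>n. norm (nprt L) \<le> norm (X n - L)) sequentially"
    using assms(2) by eventually_elim (rule norm_nprt_le_dist)
  hence "norm (nprt L) \<le> 0"
    by (intro tendsto_le[OF _ t tendsto_const]) auto
  hence "nprt L = 0" by simp
  thus ?thesis by (simp add: zero_le_iff_zero_nprt)
qed

lemma inf_add_le:
  fixes a b c :: "'a::banach_lattice"
  assumes "0 \<le> a" "0 \<le> b" "0 \<le> c"
  shows "inf a (b + c) \<le> inf a b + inf a c"
proof -
  have "inf a b + inf a c = inf (inf (a + a) (b + a)) (inf (a + c) (b + c))"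
    by (simp add: add_inf_distrib_left add_inf_distrib_right)
  moreover have "inf a (b + c) \<le> a + a" using assms by (intro inf.coboundedI1) simp
  moreover have "inf a (b + c) \<le> a + c" using assms by (intro inf.coboundedI1) simp
  moreover have "inf a (b + c) \<le> b + a" using assms by (intro inf.coboundedI1) simp
  moreover have "inf a (b + c) \<le> b + c" by simp
  ultimately show ?thesis by simp
qed

lemma scaleR_inf:
  fixes a b :: "'a::banach_lattice"
  assumes "0 \<le> c" shows "c *\<^sub>R inf a b = inf (c *\<^sub>R a) (c *\<^sub>R b)"
proof (cases "c = 0")
  case True thus ?thesis by simp
next
  case False
  hence c: "c > 0" using assms by simp
  show ?thesis
  proof (rule antisym)
    show "c *\<^sub>R inf a b \<le> inf (c *\<^sub>R a) (c *\<^sub>R b)"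
      using assms by (simp add: scaleR_left_mono)
    have "(1/c) *\<^sub>R inf (c *\<^sub>R a) (c *\<^sub>R b) \<le> (1/c) *\<^sub>R (c *\<^sub>R a)"
      using c by (intro scaleR_left_mono) auto
    moreover have "(1/c) *\<^sub>R inf (c *\<^sub>R a) (c *\<^sub>R b) \<le> (1/c) *\<^sub>R (c *\<^sub>R b)"
      using c by (intro scaleR_left_mono) auto
    ultimately have "(1/c) *\<^sub>R inf (c *\<^sub>R a) (c *\<^sub>R b) \<le> inf a b" using c by simp
    hence "c *\<^sub>R ((1/c) *\<^sub>R inf (c *\<^sub>R a) (c *\<^sub>R b)) \<le> c *\<^sub>R inf a b"
      using c by (intro scaleR_left_mono) auto
    thus "inf (c *\<^sub>R a) (c *\<^sub>R b) \<le> c *\<^sub>R inf a b" using c by simp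
  qed
qed

lemma scaleR_sup:
  fixes a b :: "'a::banach_lattice"
  assumes "0 \<le> c" shows "c *\<^sub>R sup a b = sup (c *\<^sub>R a) (c *\<^sub>R b)"
proof -
  have "c *\<^sub>R sup a b = c *\<^sub>R (- inf (-a) (-b))" by (simp only: neg_inf_eq_sup minus_minus)
  also have "\<dots> = - (c *\<^sub>R inf (-a) (-b))" by (rule scaleR_minus_right)
  also have "\<dots> = - inf (c *\<^sub>R (-a)) (c *\<^sub>R (-b))" by (simp only: scaleR_inf[OF assms])
  also have "\<dots> = sup (c *\<^sub>R a) (c *\<^sub>R b)" by (simp only: scaleR_minus_right neg_inf_eq_sup minus_minus)
  finally show ?thesis .
qed

lemma pprt_scaleR: "0 \<le> c \<Longrightarrow> pprt (c *\<^sub>R (x::'a::banach_lattice)) = c *\<^sub>R pprt x"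
  unfolding pprt_def by (subst scaleR_sup) simp_all

lemma nprt_scaleR: "0 \<le> c \<Longrightarrow> nprt (c *\<^sub>R (x::'a::banach_lattice)) = c *\<^sub>R nprt x"
  unfolding nprt_def by (subst scaleR_inf) simp_all

lemma pprt_inf_neg_nprt: "inf (pprt (p::'a::banach_lattice)) (- nprt p) = 0"
proof -
  let ?a = "pprt p"
  have b: "- nprt p = ?a - p"
    by (subst (2) prts) simp
  have c: "inf ?a (?a - p) = ?a + inf 0 (- p)"
    by (simp add: add_inf_distrib_left)
  have d: "inf 0 (- p) = - ?a" by (simp add: pprt_def neg_sup_eq_inf sup.commute)
  show ?thesis using b c d by simp
qed

lemma disj_scale:
  fixes a b :: "'a::banach_lattice"
  assumes "0 \<le> a" "0 \<le> b" "inf a b = 0" "0 \<le> c" "0 \<le> d"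
  shows "inf (c *\<^sub>R a) (d *\<^sub>R b) = 0"
proof (rule antisym)
  let ?K = "max c d"
  have "inf (c *\<^sub>R a) (d *\<^sub>R b) \<le> inf (?K *\<^sub>R a) (?K *\<^sub>R b)"
    using assms by (intro inf_mono scaleR_right_mono) auto
  also have "\<dots> = ?K *\<^sub>R inf a b" using assms scaleR_inf[of ?K a b] by simp
  finally show "inf (c *\<^sub>R a) (d *\<^sub>R b) \<le> 0" using assms by simp
  have "0 \<le> c *\<^sub>R a" "0 \<le> d *\<^sub>R b" using assms by (simp_all add: scaleR_nonneg_nonneg)
  thus "0 \<le> inf (c *\<^sub>R a) (d *\<^sub>R b)" by simp
qed

lemma disj_pprt:
  fixes x y :: "'a::banach_lattice"
  assumes "c > 0"
  shows "inf (pprt (x - c *\<^sub>R y)) (pprt (y - (1/c) *\<^sub>R x)) = 0"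
proof -
  let ?p = "x - c *\<^sub>R y"
  have e: "y - (1/c) *\<^sub>R x = (1/c) *\<^sub>R (- ?p)" using assms by (simp add: algebra_simps)
  have f: "pprt ((1/c) *\<^sub>R (- ?p)) = (1/c) *\<^sub>R pprt (- ?p)"
    by (rule pprt_scaleR) (use assms in simp)
  have g: "pprt (- ?p) = - nprt ?p" by (rule pprt_neg)
  have h: "inf (1 *\<^sub>R pprt ?p) ((1/c) *\<^sub>R (- nprt ?p)) = 0"
    by (rule disj_scale[OF zero_le_pprt _ pprt_inf_neg_nprt]) (use assms in simp_all)
  have "pprt (y - (1/c) *\<^sub>R x) = (1/c) *\<^sub>R (- nprt ?p)" by (simp only: e f g)
  moreover have "1 *\<^sub>R pprt ?p = pprt ?p" by (rule scaleR_one)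
  ultimately show ?thesis using h by (simp only:)
qed

definition posf :: "('a::banach_lattice \<Rightarrow>\<^sub>L real) \<Rightarrow> bool" where
  "posf f \<longleftrightarrow> (\<forall>x. 0 \<le> x \<longrightarrow> 0 \<le> blinfun_apply f x)"

lemma posf_dual_le: "dual_le 0 f \<longleftrightarrow> posf f"
  by (simp add: dual_le_def posf_def)

lemma posf_mono:
  assumes "posf f" "x \<le> y" shows "blinfun_apply f x \<le> blinfun_apply f y"
proof -
  have "0 \<le> blinfun_apply f (y - x)" using assms by (simp add: posf_def)
  thus ?thesis by (simp add: blinfun.diff_right)
qed

lemma blinfun_le_norm: "blinfun_apply f x \<le> norm f * norm x" for f :: "'a::real_normed_vector \<Rightarrow>\<^sub>L real"
  using norm_blinfun[of f x] by simp

lemma ext_pos: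
  fixes \<phi> :: "'a::banach_lattice \<Rightarrow> real"
  assumes add: "\<And>x y. 0 \<le> x \<Longrightarrow> 0 \<le> y \<Longrightarrow> \<phi> (x + y) = \<phi> x + \<phi> y"
    and hom: "\<And>c x. 0 \<le> c \<Longrightarrow> 0 \<le> x \<Longrightarrow> \<phi> (c *\<^sub>R x) = c * \<phi> x"
    and bnd: "\<And>x. 0 \<le> x \<Longrightarrow> \<phi> x \<le> C * norm x"
    and nn: "\<And>x. 0 \<le> x \<Longrightarrow> 0 \<le> \<phi> x"
  shows "\<exists>h. \<forall>x. 0 \<le> x \<longrightarrow> blinfun_apply h x = \<phi> x"
proof -
  define g where "g x = \<phi> (pprt x) - \<phi> (- nprt x)" for x
  have phi0: "\<phi> 0 = 0" using hom[of 0 0] by simp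
  have geq: "g x = \<phi> x" if "0 \<le> x" for x using that phi0 by (simp add: g_def)
  have gadd: "g (x + y) = g x + g y" for x y
  proof -
    have e: "pprt (x + y) + (- nprt x) + (- nprt y) = pprt x + pprt y + (- nprt (x + y))"
    proof -
      have "x + y = pprt (x + y) + nprt (x + y)" by (rule prts)
      moreover have "x = pprt x + nprt x" by (rule prts)
      moreover have "y = pprt y + nprt y" by (rule prts)
      ultimately show ?thesis by (simp add: algebra_simps)
    qed
    have add3: "\<phi> (a + b + c) = \<phi> a + \<phi> b + \<phi> c" if "0 \<le> a" "0 \<le> b" "0 \<le> c" for a b c
      using that add[of "a + b" c] add[of a b] by simp
    have "\<phi> (pprt (x + y) + (- nprt x) + (- nprt y)) = \<phi> (pprt (x + y)) + \<phi> (- nprt x) + \<phi> (- nprt y)"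
      by (rule add3) simp_all
    moreover have "\<phi> (pprt x + pprt y + (- nprt (x + y))) = \<phi> (pprt x) + \<phi> (pprt y) + \<phi> (- nprt (x + y))"
      by (rule add3) simp_all
    ultimately show ?thesis using e by (simp add: g_def)
  qed
  have gpos: "g (c *\<^sub>R x) = c * g x" if "0 \<le> c" for c x
  proof -
    have "pprt (c *\<^sub>R x) = c *\<^sub>R pprt x" using that by (rule pprt_scaleR)
    moreover have "- nprt (c *\<^sub>R x) = c *\<^sub>R (- nprt x)" using that by (simp add: nprt_scaleR)
    moreover have "\<phi> (c *\<^sub>R (- nprt x)) = c * \<phi> (- nprt x)" using that by (intro hom) simp_all
    moreover have "\<phi> (c *\<^sub>R pprt x) = c * \<phi> (pprt x)" using that by (intro hom) simp_all
    ultimately show ?thesis unfolding g_def by (simp only: right_diff_distrib)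
  qed
  have gneg: "g (- x) = - g x" for x by (simp add: g_def pprt_neg nprt_neg)
  have gscale: "g (c *\<^sub>R x) = c * g x" for c x
  proof (cases "0 \<le> c")
    case True thus ?thesis by (rule gpos)
  next
    case False
    hence "c *\<^sub>R x = (- c) *\<^sub>R (- x)" by simp
    thus ?thesis using gpos[of "-c" "-x"] False gneg[of x] by simp
  qed
  let ?K = "max C 0"
  have bnd': "\<phi> x \<le> ?K * norm x" if "0 \<le> x" for x
    using bnd[OF that] by (meson max.cobounded1 mult_right_mono norm_ge_zero order_trans)
  have gbnd: "norm (g x) \<le> norm x * (2 * ?K)" for x
  proof -
    have a: "0 \<le> \<phi> (pprt x)" "0 \<le> \<phi> (- nprt x)" by (auto intro: nn)
    have "\<phi> (pprt x) \<le> ?K * norm (pprt x)" by (rule bnd') simp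
    also have "\<dots> \<le> ?K * norm x" by (intro mult_left_mono norm_pprt_le) simp
    finally have b: "\<phi> (pprt x) \<le> ?K * norm x" .
    have "\<phi> (- nprt x) \<le> ?K * norm (- nprt x)" by (rule bnd') simp
    also have "\<dots> \<le> ?K * norm x" using norm_nprt_le[of x] by (intro mult_left_mono) simp_all
    finally have c: "\<phi> (- nprt x) \<le> ?K * norm x" .
    have d: "norm x * (2 * ?K) = 2 * (?K * norm x)" "0 \<le> ?K * norm x" by simp_all
    show ?thesis unfolding g_def real_norm_def abs_le_iff using a b c d by linarith
  qed
  have bl: "bounded_linear g"
    by (rule bounded_linear_intro[where K = "2 * ?K"]) (use gbnd in \<open>auto simp: gadd gscale\<close>)
  show ?thesis
    by (rule exI[of _ "Blinfun g"]) (simp add: bounded_linear_Blinfun_apply[OF bl] geq)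
qed

declare scaleR_nonneg_nonneg[simp]

definition comp_fun :: "'a::banach_lattice \<Rightarrow> ('a \<Rightarrow>\<^sub>L real) \<Rightarrow> 'a \<Rightarrow> real" where
  "comp_fun a f y = (SUP t\<in>{0..}. blinfun_apply f (inf y (t *\<^sub>R a)))"

context
  fixes a :: "'a::banach_lattice" and f :: "'a \<Rightarrow>\<^sub>L real"
  assumes a0: "0 \<le> a" and fp: "posf f"
begin

lemma comp_bdd: "0 \<le> y \<Longrightarrow> bdd_above ((\<lambda>t. blinfun_apply f (inf y (t *\<^sub>R a))) ` {0..})"
  by (rule bdd_aboveI2[of _ _ "blinfun_apply f y"]) (rule posf_mono[OF fp], simp)

lemma comp_ge: "0 \<le> y \<Longrightarrow> 0 \<le> t \<Longrightarrow> blinfun_apply f (inf y (t *\<^sub>R a)) \<le> comp_fun a f y"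
  unfolding comp_fun_def by (rule cSUP_upper[OF _ comp_bdd]) auto

lemma comp_le: "0 \<le> y \<Longrightarrow> comp_fun a f y \<le> blinfun_apply f y"
  unfolding comp_fun_def by (rule cSUP_least) (auto intro: posf_mono[OF fp])

lemma comp_least: "(\<And>t. 0 \<le> t \<Longrightarrow> blinfun_apply f (inf y (t *\<^sub>R a)) \<le> M) \<Longrightarrow> comp_fun a f y \<le> M"
  unfolding comp_fun_def by (rule cSUP_least) auto

lemma comp_nn: "0 \<le> y \<Longrightarrow> 0 \<le> comp_fun a f y"
  using comp_ge[of y 0] by (simp add: inf_absorb2)

lemma comp_full: "0 \<le> y \<Longrightarrow> 0 \<le> t \<Longrightarrow> y \<le> t *\<^sub>R a \<Longrightarrow> comp_fun a f y = blinfun_apply f y"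
  using comp_ge[of y t] comp_le[of y] by (simp add: inf_absorb1)

lemma comp_add:
  assumes "0 \<le> y1" "0 \<le> y2"
  shows "comp_fun a f (y1 + y2) = comp_fun a f y1 + comp_fun a f y2"
proof (rule antisym)
  show "comp_fun a f (y1 + y2) \<le> comp_fun a f y1 + comp_fun a f y2"
  proof (rule comp_least)
    fix t :: real assume t: "0 \<le> t"
    have ta: "0 \<le> t *\<^sub>R a" using t a0 by simp
    have "inf (y1 + y2) (t *\<^sub>R a) \<le> inf y1 (t *\<^sub>R a) + inf y2 (t *\<^sub>R a)"
      using inf_add_le[OF ta assms] by (simp add: inf_commute)
    from posf_mono[OF fp this]
    have "blinfun_apply f (inf (y1 + y2) (t *\<^sub>R a)) \<le> blinfun_apply f (inf y1 (t *\<^sub>R a)) + blinfun_apply f (inf y2 (t *\<^sub>R a))"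
      by (simp add: blinfun.add_right)
    also have "\<dots> \<le> comp_fun a f y1 + comp_fun a f y2"
      using comp_ge[OF assms(1) t] comp_ge[OF assms(2) t] by simp
    finally show "blinfun_apply f (inf (y1 + y2) (t *\<^sub>R a)) \<le> comp_fun a f y1 + comp_fun a f y2" .
  qed
  have key: "blinfun_apply f (inf y1 (t1 *\<^sub>R a)) + blinfun_apply f (inf y2 (t2 *\<^sub>R a)) \<le> comp_fun a f (y1 + y2)"
    if t: "0 \<le> t1" "0 \<le> t2" for t1 t2
  proof -
    let ?T = "max t1 t2"
    have i1: "inf y1 (t1 *\<^sub>R a) \<le> inf y1 (?T *\<^sub>R a)" using a0 by (intro inf_mono scaleR_right_mono) auto
    have i2: "inf y2 (t2 *\<^sub>R a) \<le> inf y2 (?T *\<^sub>R a)" using a0 by (intro inf_mono scaleR_right_mono) auto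
    have "inf y1 (?T *\<^sub>R a) + inf y2 (?T *\<^sub>R a) \<le> inf (y1 + y2) ((2 * ?T) *\<^sub>R a)"
    proof (rule le_infI)
      show "inf y1 (?T *\<^sub>R a) + inf y2 (?T *\<^sub>R a) \<le> y1 + y2" by (intro add_mono) auto
      have "inf y1 (?T *\<^sub>R a) + inf y2 (?T *\<^sub>R a) \<le> ?T *\<^sub>R a + ?T *\<^sub>R a" by (intro add_mono) auto
      also have "\<dots> = (2 * ?T) *\<^sub>R a" by (simp add: scaleR_add_left[symmetric])
      finally show "inf y1 (?T *\<^sub>R a) + inf y2 (?T *\<^sub>R a) \<le> (2 * ?T) *\<^sub>R a" .
    qed
    hence "inf y1 (t1 *\<^sub>R a) + inf y2 (t2 *\<^sub>R a) \<le> inf (y1 + y2) ((2 * ?T) *\<^sub>R a)"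
      using i1 i2 by (meson add_mono order_trans)
    hence "blinfun_apply f (inf y1 (t1 *\<^sub>R a)) + blinfun_apply f (inf y2 (t2 *\<^sub>R a)) \<le> blinfun_apply f (inf (y1 + y2) ((2 * ?T) *\<^sub>R a))"
      using posf_mono[OF fp] by (simp add: blinfun.add_right[symmetric])
    also have "\<dots> \<le> comp_fun a f (y1 + y2)" using assms t by (intro comp_ge) auto
    finally show ?thesis .
  qed
  have "comp_fun a f y1 \<le> comp_fun a f (y1 + y2) - blinfun_apply f (inf y2 (t2 *\<^sub>R a))" if "0 \<le> t2" for t2
    by (rule comp_least) (use key[OF _ that] in force)
  hence "comp_fun a f y2 \<le> comp_fun a f (y1 + y2) - comp_fun a f y1"
    by (intro comp_least) force
  thus "comp_fun a f y1 + comp_fun a f y2 \<le> comp_fun a f (y1 + y2)" by simp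
qed

lemma comp_hom:
  assumes c: "0 \<le> c" and y: "0 \<le> y"
  shows "comp_fun a f (c *\<^sub>R y) = c * comp_fun a f y"
proof (cases "c = 0")
  case True
  have "comp_fun a f 0 = 0"
    using comp_nn[of 0] comp_le[of 0] by simp
  thus ?thesis using True by simp
next
  case False
  hence c: "c > 0" using c by simp
  have sc: "inf (c *\<^sub>R y) (t *\<^sub>R a) = c *\<^sub>R inf y ((t / c) *\<^sub>R a)" for t
    using c by (simp add: scaleR_inf)
  show ?thesis
  proof (rule antisym)
    show "comp_fun a f (c *\<^sub>R y) \<le> c * comp_fun a f y"
    proof (rule comp_least)
      fix t :: real assume t: "0 \<le> t"
      have "blinfun_apply f (inf (c *\<^sub>R y) (t *\<^sub>R a)) = c * blinfun_apply f (inf y ((t / c) *\<^sub>R a))"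
        by (simp add: sc blinfun.scaleR_right)
      also have "\<dots> \<le> c * comp_fun a f y" using c t y by (intro mult_left_mono comp_ge) auto
      finally show "blinfun_apply f (inf (c *\<^sub>R y) (t *\<^sub>R a)) \<le> c * comp_fun a f y" .
    qed
    have "comp_fun a f y \<le> comp_fun a f (c *\<^sub>R y) / c"
    proof (rule comp_least)
      fix t :: real assume t: "0 \<le> t"
      have "blinfun_apply f (inf y (t *\<^sub>R a)) = blinfun_apply f (inf (c *\<^sub>R y) ((c * t) *\<^sub>R a)) / c"
        using c by (simp add: sc blinfun.scaleR_right)
      also have "\<dots> \<le> comp_fun a f (c *\<^sub>R y) / c" using c t y
        by (intro divide_right_mono comp_ge) auto
      finally show "blinfun_apply f (inf y (t *\<^sub>R a)) \<le> comp_fun a f (c *\<^sub>R y) / c" .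
    qed
    thus "c * comp_fun a f y \<le> comp_fun a f (c *\<^sub>R y)" using c by (simp add: field_simps)
  qed
qed

lemma comp_bnd: "0 \<le> y \<Longrightarrow> comp_fun a f y \<le> norm f * norm y"
  using comp_le[of y] blinfun_le_norm[of f y] by linarith

end

definition compf :: "'a::banach_lattice \<Rightarrow> ('a \<Rightarrow>\<^sub>L real) \<Rightarrow> ('a \<Rightarrow>\<^sub>L real)" where
  "compf a f = (SOME h. \<forall>y. 0 \<le> y \<longrightarrow> blinfun_apply h y = comp_fun a f y)"

lemma compf_apply:
  assumes "0 \<le> a" "posf f" "0 \<le> y"
  shows "blinfun_apply (compf a f) y = comp_fun a f y"
proof -
  have "\<exists>h. \<forall>y. 0 \<le> y \<longrightarrow> blinfun_apply h y = comp_fun a f y"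
    by (rule ext_pos[where C = "norm f"]) (use assms in \<open>auto intro: comp_add comp_hom comp_bnd comp_nn\<close>)
  hence "\<forall>y. 0 \<le> y \<longrightarrow> blinfun_apply (compf a f) y = comp_fun a f y"
    unfolding compf_def by (rule someI_ex)
  thus ?thesis using assms by simp
qed

lemma compf_pos: "0 \<le> a \<Longrightarrow> posf f \<Longrightarrow> posf (compf a f)"
  by (simp add: posf_def compf_apply comp_nn)

lemma comp_mono_a:
  assumes "0 \<le> a" "a \<le> a'" "posf f" "0 \<le> y"
  shows "comp_fun a f y \<le> comp_fun a' f y"
proof (rule comp_least[OF assms(1,3)])
  fix t :: real assume t: "0 \<le> t"
  have "inf y (t *\<^sub>R a) \<le> inf y (t *\<^sub>R a')" using assms t by (intro inf_mono scaleR_left_mono) auto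
  hence "blinfun_apply f (inf y (t *\<^sub>R a)) \<le> blinfun_apply f (inf y (t *\<^sub>R a'))" by (rule posf_mono[OF assms(3)])
  also have "\<dots> \<le> comp_fun a' f y" using assms t by (intro comp_ge) auto
  finally show "blinfun_apply f (inf y (t *\<^sub>R a)) \<le> comp_fun a' f y" .
qed

lemma inf_disj_sum_le:
  fixes y p q :: "'a::banach_lattice"
  assumes "0 \<le> y" "0 \<le> p" "0 \<le> q" "inf p q = 0"
  shows "inf y p + inf y q \<le> y"
proof -
  have "inf y p + inf y q = sup (inf y p) (inf y q) + inf (inf y p) (inf y q)" by (rule add_eq_inf_sup)
  moreover have "inf (inf y p) (inf y q) \<le> inf p q" by (intro inf_mono) auto
  moreover have "sup (inf y p) (inf y q) \<le> y" by simp
  ultimately show ?thesis using assms(4) by (metis add_mono add.right_neutral)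
qed

lemma comp_disj:
  assumes a: "0 \<le> a" and b: "0 \<le> b" and ab: "inf a b = 0" and fp: "posf f" and y: "0 \<le> y"
  shows "comp_fun a f y + comp_fun b f y \<le> comp_fun (a + b) f y"
proof -
  have ab0: "0 \<le> a + b" using a b by simp
  have key: "blinfun_apply f (inf y (t1 *\<^sub>R a)) + blinfun_apply f (inf y (t2 *\<^sub>R b)) \<le> comp_fun (a + b) f y"
    if t: "0 \<le> t1" "0 \<le> t2" for t1 t2
  proof -
    let ?T = "max t1 t2"
    have i1: "inf y (t1 *\<^sub>R a) \<le> inf y (?T *\<^sub>R a)" using a by (intro inf_mono scaleR_right_mono) auto
    have i2: "inf y (t2 *\<^sub>R b) \<le> inf y (?T *\<^sub>R b)" using b by (intro inf_mono scaleR_right_mono) auto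
    have T: "0 \<le> ?T" using t by simp
    have "inf y (?T *\<^sub>R a) + inf y (?T *\<^sub>R b) \<le> inf y (?T *\<^sub>R (a + b))"
    proof (rule le_infI)
      show "inf y (?T *\<^sub>R a) + inf y (?T *\<^sub>R b) \<le> y"
        by (rule inf_disj_sum_le) (use y a b T ab disj_scale[OF a b ab T T] in simp_all)
      have "inf y (?T *\<^sub>R a) + inf y (?T *\<^sub>R b) \<le> ?T *\<^sub>R a + ?T *\<^sub>R b" by (intro add_mono) auto
      thus "inf y (?T *\<^sub>R a) + inf y (?T *\<^sub>R b) \<le> ?T *\<^sub>R (a + b)" by (simp add: scaleR_add_right)
    qed
    hence "inf y (t1 *\<^sub>R a) + inf y (t2 *\<^sub>R b) \<le> inf y (?T *\<^sub>R (a + b))"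
      using i1 i2 by (meson add_mono order_trans)
    hence "blinfun_apply f (inf y (t1 *\<^sub>R a)) + blinfun_apply f (inf y (t2 *\<^sub>R b)) \<le> blinfun_apply f (inf y (?T *\<^sub>R (a + b)))"
      using posf_mono[OF fp] by (simp add: blinfun.add_right[symmetric])
    also have "\<dots> \<le> comp_fun (a + b) f y" using T y by (intro comp_ge[OF ab0 fp]) auto
    finally show ?thesis .
  qed
  have "comp_fun a f y \<le> comp_fun (a + b) f y - blinfun_apply f (inf y (t2 *\<^sub>R b))" if "0 \<le> t2" for t2
    by (rule comp_least[OF a fp]) (use key[OF _ that] in force)
  hence "comp_fun b f y \<le> comp_fun (a + b) f y - comp_fun a f y"
    by (intro comp_least[OF b fp]) force
  thus ?thesis by simp
qed

lemma comp_approx: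
  assumes w: "0 \<le> w" "w \<le> s" and fp: "posf f" and y: "0 \<le> y" and t: "0 \<le> t"
  shows "blinfun_apply f (inf y (t *\<^sub>R s)) \<le> comp_fun w f y + t * (norm f * norm (s - w))"
proof -
  have sw: "0 \<le> s - w" using w by simp
  have "inf y (t *\<^sub>R s) = inf y (t *\<^sub>R w + t *\<^sub>R (s - w))" by (simp add: scaleR_diff_right)
  also have "\<dots> \<le> inf y (t *\<^sub>R w) + inf y (t *\<^sub>R (s - w))"
    by (rule inf_add_le) (use y w t sw in simp_all)
  also have "\<dots> \<le> inf y (t *\<^sub>R w) + t *\<^sub>R (s - w)" by (intro add_mono) auto
  finally have le: "inf y (t *\<^sub>R s) \<le> inf y (t *\<^sub>R w) + t *\<^sub>R (s - w)" .
  from posf_mono[OF fp le]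
  have "blinfun_apply f (inf y (t *\<^sub>R s)) \<le> blinfun_apply f (inf y (t *\<^sub>R w)) + t * blinfun_apply f (s - w)"
    by (simp add: blinfun.add_right blinfun.scaleR_right)
  also have "\<dots> \<le> comp_fun w f y + t * (norm f * norm (s - w))"
    using comp_ge[OF w(1) fp y t] blinfun_le_norm[of f "s - w"] t by (intro add_mono mult_left_mono) auto
  finally show ?thesis .
qed

definition pp_fun :: "('a::banach_lattice \<Rightarrow>\<^sub>L real) \<Rightarrow> 'a \<Rightarrow> real" where
  "pp_fun f y = (SUP z\<in>{z. 0 \<le> z \<and> z \<le> y}. blinfun_apply f z)"

lemma pp_bdd:
  fixes y :: "'a::banach_lattice" and f :: "'a \<Rightarrow>\<^sub>L real"
  assumes "0 \<le> y"
  shows "bdd_above ((\<lambda>z. blinfun_apply f z) ` {z. 0 \<le> z \<and> z \<le> y})"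
proof -
  have b: "blinfun_apply f z \<le> norm f * norm y" if "z \<in> {z. 0 \<le> z \<and> z \<le> y}" for z
  proof -
    from that have "norm z \<le> norm y" by (auto intro: norm_mono_pos)
    thus ?thesis
      using blinfun_le_norm[of f z] by (meson mult_left_mono norm_ge_zero order_trans)
  qed
  show ?thesis unfolding bdd_above_def using b by blast
qed

lemma pp_ge: "0 \<le> z \<Longrightarrow> z \<le> (y::'a::banach_lattice) \<Longrightarrow> blinfun_apply f z \<le> pp_fun f y"
  unfolding pp_fun_def by (rule cSUP_upper[OF _ pp_bdd]) auto

lemma pp_least: "(\<And>z. 0 \<le> z \<Longrightarrow> z \<le> (y::'a::banach_lattice) \<Longrightarrow> blinfun_apply f z \<le> M) \<Longrightarrow> 0 \<le> y \<Longrightarrow> pp_fun f y \<le> M"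
  unfolding pp_fun_def by (rule cSUP_least) auto

lemma pp_nn: "0 \<le> (y::'a::banach_lattice) \<Longrightarrow> 0 \<le> pp_fun f y"
  using pp_ge[of 0 y f] by simp

lemma pp_bnd: "0 \<le> (y::'a::banach_lattice) \<Longrightarrow> pp_fun f y \<le> norm f * norm y"
proof (rule pp_least)
  fix z assume "0 \<le> z" "z \<le> y"
  hence "norm z \<le> norm y" by (auto intro: norm_mono_pos)
  thus "blinfun_apply f z \<le> norm f * norm y"
    using blinfun_le_norm[of f z] by (meson mult_left_mono norm_ge_zero order_trans)
qed

lemma pp_add:
  fixes y1 y2 :: "'a::banach_lattice"
  assumes "0 \<le> y1" "0 \<le> y2"
  shows "pp_fun f (y1 + y2) = pp_fun f y1 + pp_fun f y2"
proof (rule antisym)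
  show "pp_fun f (y1 + y2) \<le> pp_fun f y1 + pp_fun f y2"
  proof (rule pp_least)
    fix z assume z: "0 \<le> z" "z \<le> y1 + y2"
    let ?z1 = "inf z y1"
    have "z - ?z1 = sup 0 (z - y1)"
      by (simp add: diff_inf_eq_sup add_sup_distrib_left)
    also have "\<dots> \<le> y2" using assms z by (simp add: algebra_simps)
    finally have z2: "z - ?z1 \<le> y2" .
    have nn: "0 \<le> z - ?z1" by (simp only: diff_ge_0_iff_ge) simp
    have "blinfun_apply f (z - ?z1) = blinfun_apply f z - blinfun_apply f ?z1" by (rule blinfun.diff_right)
    hence "blinfun_apply f z = blinfun_apply f ?z1 + blinfun_apply f (z - ?z1)" by linarith
    also have "\<dots> \<le> pp_fun f y1 + pp_fun f y2"
      using z assms z2 nn by (intro add_mono pp_ge) auto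
    finally show "blinfun_apply f z \<le> pp_fun f y1 + pp_fun f y2" .
  qed (use assms in simp)
  have key: "blinfun_apply f z1 + blinfun_apply f z2 \<le> pp_fun f (y1 + y2)"
    if "0 \<le> z1" "z1 \<le> y1" "0 \<le> z2" "z2 \<le> y2" for z1 z2
    using that pp_ge[of "z1 + z2" "y1 + y2" f] by (simp add: add_mono blinfun.add_right)
  have "pp_fun f y1 \<le> pp_fun f (y1 + y2) - blinfun_apply f z2" if "0 \<le> z2" "z2 \<le> y2" for z2
    by (rule pp_least) (use key that assms in force)+
  hence "pp_fun f y2 \<le> pp_fun f (y1 + y2) - pp_fun f y1"
    by (intro pp_least) (use assms in force)+
  thus "pp_fun f y1 + pp_fun f y2 \<le> pp_fun f (y1 + y2)" by simp
qed

lemma pp_hom: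
  fixes y :: "'a::banach_lattice"
  assumes c: "0 \<le> c" and y: "0 \<le> y"
  shows "pp_fun f (c *\<^sub>R y) = c * pp_fun f y"
proof (cases "c = 0")
  case True
  have "pp_fun f 0 \<le> 0" by (rule pp_least) (auto dest: antisym)
  thus ?thesis using True pp_nn[of "0::'a" f] by simp
next
  case False
  hence c: "c > 0" using c by simp
  show ?thesis
  proof (rule antisym)
    show "pp_fun f (c *\<^sub>R y) \<le> c * pp_fun f y"
    proof (rule pp_least)
      fix z assume z: "0 \<le> z" "z \<le> c *\<^sub>R y"
      have "(1/c) *\<^sub>R z \<le> (1/c) *\<^sub>R (c *\<^sub>R y)" using z c by (intro scaleR_left_mono) auto
      hence "(1/c) *\<^sub>R z \<le> y" using c by simp
      hence "blinfun_apply f ((1/c) *\<^sub>R z) \<le> pp_fun f y" using z c by (intro pp_ge) auto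
      hence "c * blinfun_apply f ((1/c) *\<^sub>R z) \<le> c * pp_fun f y" using c by simp
      thus "blinfun_apply f z \<le> c * pp_fun f y" using c by (simp add: blinfun.scaleR_right)
    qed (use c y in simp)
    have "pp_fun f y \<le> pp_fun f (c *\<^sub>R y) / c"
    proof (rule pp_least)
      fix z assume z: "0 \<le> z" "z \<le> y"
      have "blinfun_apply f (c *\<^sub>R z) \<le> pp_fun f (c *\<^sub>R y)" using z c by (intro pp_ge scaleR_left_mono) auto
      thus "blinfun_apply f z \<le> pp_fun f (c *\<^sub>R y) / c" using c by (simp add: blinfun.scaleR_right field_simps)
    qed (use y in simp)
    thus "c * pp_fun f y \<le> pp_fun f (c *\<^sub>R y)" using c by (simp add: field_simps)
  qed
qed

lemma pp_exists:
  "\<exists>p::'a::banach_lattice \<Rightarrow>\<^sub>L real. \<forall>y. 0 \<le> y \<longrightarrow> blinfun_apply p y = pp_fun f y"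
  by (rule ext_pos[where C = "norm f"]) (auto intro: pp_add pp_hom pp_bnd pp_nn)

lemma dominate:
  fixes f :: "'a::banach_lattice \<Rightarrow>\<^sub>L real"
  shows "\<exists>G. posf G \<and> (\<forall>x. \<bar>blinfun_apply f x\<bar> \<le> blinfun_apply G (lmod x))"
proof -
  obtain p :: "'a \<Rightarrow>\<^sub>L real" where p: "\<And>y. 0 \<le> y \<Longrightarrow> blinfun_apply p y = pp_fun f y"
    using pp_exists by blast
  have pf: "blinfun_apply f y \<le> blinfun_apply p y" if "0 \<le> y" for y using that p pp_ge[of y y f] by simp
  have pp: "posf p" by (simp add: posf_def p pp_nn)
  define q where "q = p - f"
  have qp: "posf q" unfolding posf_def q_def using pf by (simp add: blinfun.diff_left)
  define G where "G = p + q"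
  have Gp: "posf G" using pp qp unfolding posf_def G_def by (simp add: blinfun.add_left)
  have one: "blinfun_apply f x \<le> blinfun_apply G (lmod x)" for x
  proof -
    have "blinfun_apply f x = blinfun_apply f (pprt x) - blinfun_apply f (- nprt x)"
      by (subst (1) prts[of x]) (simp add: blinfun.add_right blinfun.minus_right)
    also have "\<dots> = blinfun_apply f (pprt x) + blinfun_apply q (- nprt x) - blinfun_apply p (- nprt x)"
      by (simp add: q_def blinfun.diff_left)
    also have "\<dots> \<le> blinfun_apply p (lmod x) + blinfun_apply q (lmod x)"
    proof -
      have "blinfun_apply f (pprt x) \<le> blinfun_apply p (pprt x)" by (rule pf) simp
      also have "\<dots> \<le> blinfun_apply p (lmod x)" by (rule posf_mono[OF pp pprt_le_lmod])
      finally have a: "blinfun_apply f (pprt x) \<le> blinfun_apply p (lmod x)" .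
      have b: "blinfun_apply q (- nprt x) \<le> blinfun_apply q (lmod x)" by (rule posf_mono[OF qp neg_nprt_le_lmod])
      have c: "0 \<le> blinfun_apply p (- nprt x)" using pp by (simp add: posf_def)
      show ?thesis using a b c by linarith
    qed
    finally show ?thesis by (simp add: G_def blinfun.add_left)
  qed
  have "lmod (- x) = lmod x" for x :: 'a by (simp add: lmod_def sup_commute)
  hence "\<bar>blinfun_apply f x\<bar> \<le> blinfun_apply G (lmod x)" for x
    using one[of x] one[of "-x"] by (simp add: blinfun.minus_right abs_le_iff)
  thus ?thesis using Gp by blast
qed

lemma psum_mono:
  fixes e :: "nat \<Rightarrow> 'a::banach_lattice"
  assumes "\<And>n. 0 \<le> e n" "N \<le> K"
  shows "sum e {..<N} \<le> sum e {..<K}"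
  using assms(2)
proof (induction rule: dec_induct)
  case base thus ?case by simp
next
  case (step n) thus ?case using assms(1)[of n] by (simp add: add_increasing2)
qed

lemma psum_le_suminf:
  fixes e :: "nat \<Rightarrow> 'a::banach_lattice"
  assumes "summable e" "\<And>n. 0 \<le> e n"
  shows "sum e {..<N} \<le> suminf e"
proof -
  have "(\<lambda>n. sum e {..<n} - sum e {..<N}) \<longlonglongrightarrow> suminf e - sum e {..<N}"
    by (intro tendsto_diff summable_LIMSEQ assms tendsto_const)
  moreover have "eventually (\<lambda>n. 0 \<le> sum e {..<n} - sum e {..<N}) sequentially"
  proof (rule eventually_mono[OF eventually_ge_at_top[of N]])
    fix n assume "N \<le> n"
    from psum_mono[OF assms(2) this] show "0 \<le> sum e {..<n} - sum e {..<N}" by simp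
  qed
  ultimately have "0 \<le> suminf e - sum e {..<N}" by (rule cone_closed)
  thus ?thesis by simp
qed

lemma inf_sum_zero:
  fixes a :: "'a::banach_lattice"
  assumes "finite B" "0 \<le> a" "\<And>b. b \<in> B \<Longrightarrow> 0 \<le> g b" "\<And>b. b \<in> B \<Longrightarrow> inf a (g b) = 0"
  shows "inf a (sum g B) = 0"
  using assms(1,3,4)
proof (induction B rule: finite_induct)
  case empty thus ?case using assms(2) by (simp add: inf_absorb2)
next
  case (insert x F)
  have s: "0 \<le> sum g F" using insert by (simp add: sum_nonneg)
  have "inf a (g x + sum g F) \<le> inf a (g x) + inf a (sum g F)"
    by (rule inf_add_le) (use assms(2) insert s in auto)
  hence "inf a (g x + sum g F) \<le> 0" using insert by simp
  moreover have "0 \<le> inf a (g x + sum g F)" using assms(2) insert s by simp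
  ultimately show ?case using insert by simp
qed

lemma DS:
  fixes f :: "'a::banach_lattice \<Rightarrow>\<^sub>L real" and d :: "nat \<Rightarrow> 'a"
  assumes oc: "dual_order_continuous TYPE('a)"
    and fp: "posf f"
    and d0: "\<And>n. 0 \<le> d n"
    and dd: "\<And>n m. n \<noteq> m \<Longrightarrow> inf (d n) (d m) = 0"
    and dM: "\<And>n. norm (d n) \<le> M"
  shows "(\<lambda>n. blinfun_apply f (d n)) \<longlonglongrightarrow> 0"
proof -
  define e where "e n = ((1/2)^n) *\<^sub>R d n" for n
  have e0: "0 \<le> e n" for n using d0 by (simp add: e_def)
  have M0: "0 \<le> M" using dM[of 0] norm_ge_zero[of "d 0"] by linarith
  have esum: "summable e"
  proof (rule summable_comparison_test')
    show "summable (\<lambda>n. M * (1/2)^n)" by (intro summable_mult summable_geometric) simp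
    show "norm (e n) \<le> M * (1/2)^n" for n using dM[of n] by (simp add: e_def mult.commute)
  qed
  define s where "s = suminf e"
  define w where "w N = sum e {..<N}" for N
  define z where "z N = s - w N" for N
  have wlim: "w \<longlonglongrightarrow> s" unfolding w_def s_def by (rule summable_LIMSEQ[OF esum])
  have w0: "0 \<le> w N" for N unfolding w_def using e0 by (simp add: sum_nonneg)
  have wmono: "N \<le> K \<Longrightarrow> w N \<le> w K" for N K unfolding w_def by (rule psum_mono[OF e0])
  have ws: "w N \<le> s" for N unfolding w_def s_def by (rule psum_le_suminf[OF esum e0])
  have z0: "0 \<le> z N" for N using ws[of N] by (simp add: z_def)
  have zanti: "N \<le> K \<Longrightarrow> z K \<le> z N" for N K using wmono[of N K] by (simp add: z_def)
  have ebig: "e n \<le> z N" if "N \<le> n" for N n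
  proof -
    have "w N + e n \<le> w n + e n" using wmono[OF that] by simp
    also have "\<dots> = w (Suc n)" by (simp add: w_def)
    also have "\<dots> \<le> s" by (rule ws)
    finally show ?thesis by (simp add: z_def algebra_simps)
  qed
  have dbig: "d n \<le> (2^n) *\<^sub>R z N" if "N \<le> n" for N n
  proof -
    have "(2^n) *\<^sub>R e n \<le> (2^n) *\<^sub>R z N" by (intro scaleR_left_mono ebig that) simp
    moreover have "(2^n) *\<^sub>R e n = d n" by (simp add: e_def power_one_over)
    ultimately show ?thesis by simp
  qed
  have edisj: "inf (e i) (e j) = 0" if "i \<noteq> j" for i j
    unfolding e_def by (rule disj_scale[OF d0 d0 dd[OF that]]) simp_all
  have wdisj: "inf (w N) (w K - w N) = 0" if "N \<le> K" for N K
  proof -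
    have eq: "w K - w N = sum e {N..<K}"
      unfolding w_def using that by (metis atLeast0LessThan sum.atLeastLessThan_concat le0 add_diff_cancel_left')
    have inner: "inf (e b) (sum e {N..<K}) = 0" if "b < N" for b
      by (rule inf_sum_zero) (use e0 edisj that in auto)
    moreover have "inf (sum e {N..<K}) (w N) = 0"
      unfolding w_def
      by (rule inf_sum_zero) (use e0 inner in \<open>auto simp: sum_nonneg inf_commute\<close>)
    hence "inf (w N) (sum e {N..<K}) = 0" by (simp add: inf_commute)
    thus ?thesis using eq by simp
  qed
  have swlim: "(\<lambda>K. norm (s - w K)) \<longlonglongrightarrow> 0"
  proof -
    have "(\<lambda>K. s - w K) \<longlonglongrightarrow> s - s" by (intro tendsto_diff tendsto_const wlim)
    thus ?thesis by (simp add: tendsto_norm_zero)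
  qed
  have wz_disj: "inf (w N) (z N) = 0" for N
  proof -
    have b: "norm (inf (w N) (z N)) \<le> norm (s - w K)" if "N \<le> K" for K
    proof -
      have "z N = (w K - w N) + (s - w K)" by (simp add: z_def)
      hence "inf (w N) (z N) \<le> inf (w N) (w K - w N) + inf (w N) (s - w K)"
        using inf_add_le[of "w N" "w K - w N" "s - w K"] w0 wmono[OF that] ws[of K] by simp
      also have "\<dots> \<le> s - w K" using wdisj[OF that] by simp
      finally have le: "inf (w N) (z N) \<le> s - w K" .
      have ge: "0 \<le> inf (w N) (z N)" using w0 z0 by simp
      show ?thesis by (rule norm_mono_pos[OF ge le])
    qed
    have "norm (inf (w N) (z N)) \<le> 0"
      by (rule tendsto_le[OF _ swlim tendsto_const])
         (auto intro: eventually_mono[OF eventually_ge_at_top[of N]] b)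
    thus ?thesis by simp
  qed
  have s0: "0 \<le> s" using w0[of 0] ws[of 0] by simp
  define P where "P N = compf (z N) f" for N
  have Pa: "0 \<le> y \<Longrightarrow> blinfun_apply (P N) y = comp_fun (z N) f y" for N y
    unfolding P_def by (rule compf_apply[OF z0 fp])
  have H: "range P \<noteq> {} \<and>
        (\<forall>g1\<in>range P. \<forall>g2\<in>range P. \<exists>h\<in>range P. dual_le h g1 \<and> dual_le h g2) \<and>
        (\<forall>g\<in>range P. dual_le 0 g) \<and>
        (\<forall>h. (\<forall>g\<in>range P. dual_le h g) \<longrightarrow> dual_le h 0)"
  proof (intro conjI)
    show "range P \<noteq> {}" by simp
    have dl: "dual_le (P K) (P N)" if "N \<le> K" for N K
      unfolding dual_le_def using comp_mono_a[OF z0 zanti[OF that] fp] by (simp add: Pa)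
    show "\<forall>g1\<in>range P. \<forall>g2\<in>range P. \<exists>h\<in>range P. dual_le h g1 \<and> dual_le h g2"
    proof (intro ballI)
      fix g1 g2 assume "g1 \<in> range P" "g2 \<in> range P"
      then obtain N K where "g1 = P N" "g2 = P K" by auto
      thus "\<exists>h\<in>range P. dual_le h g1 \<and> dual_le h g2"
        using dl[of N "max N K"] dl[of K "max N K"] by auto
    qed
    show "\<forall>g\<in>range P. dual_le 0 g"
      unfolding posf_dual_le P_def using compf_pos[OF z0 fp] by auto
    show "\<forall>h. (\<forall>g\<in>range P. dual_le h g) \<longrightarrow> dual_le h 0"
    proof (intro allI impI)
      fix h assume hP: "\<forall>g\<in>range P. dual_le h g"
      show "dual_le h 0"
        unfolding dual_le_def
      proof (intro allI impI)
        fix y :: 'a assume y: "0 \<le> y"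
        have hy: "blinfun_apply h y \<le> comp_fun (z N) f y" for N
        proof -
          have "dual_le h (P N)" using hP by simp
          hence "blinfun_apply h y \<le> blinfun_apply (P N) y" using y unfolding dual_le_def by blast
          thus ?thesis using Pa[OF y, of N] by simp
        qed
        have sum: "comp_fun (w N) f y + comp_fun (z N) f y \<le> comp_fun s f y" for N
          using comp_disj[OF w0 z0 wz_disj fp y, of N] by (simp add: z_def)
        have main: "blinfun_apply f (inf y (t *\<^sub>R s)) \<le> comp_fun s f y - blinfun_apply h y"
          if t: "0 \<le> t" for t
        proof -
          have bN: "blinfun_apply f (inf y (t *\<^sub>R s)) \<le> comp_fun s f y - blinfun_apply h y + t * (norm f * norm (s - w N))" for N
            using comp_approx[OF w0 ws fp y t, of N] hy[of N] sum[of N] by linarith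
          have lim: "(\<lambda>N. comp_fun s f y - blinfun_apply h y + t * (norm f * norm (s - w N))) \<longlonglongrightarrow> comp_fun s f y - blinfun_apply h y + t * (norm f * 0)"
            by (intro tendsto_intros swlim)
          show ?thesis using tendsto_le[OF _ lim tendsto_const] bN by simp
        qed
        have "comp_fun s f y \<le> comp_fun s f y - blinfun_apply h y"
          by (rule comp_least[OF s0 fp]) (rule main)
        thus "blinfun_apply h y \<le> blinfun_apply 0 y" by simp
      qed
    qed
  qed
  have small: "\<forall>r>0. \<exists>g\<in>range P. norm g < r"
  proof -
    from oc have "\<forall>D :: ('a \<Rightarrow>\<^sub>L real) set. D \<noteq> {} \<and>
        (\<forall>f\<in>D. \<forall>g\<in>D. \<exists>h\<in>D. dual_le h f \<and> dual_le h g) \<and>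
        (\<forall>f\<in>D. dual_le 0 f) \<and>
        (\<forall>h. (\<forall>f\<in>D. dual_le h f) \<longrightarrow> dual_le h 0)
        \<longrightarrow> (\<forall>e>0. \<exists>f\<in>D. norm f < e)" unfolding dual_order_continuous_def .
    from this[rule_format, OF H] show ?thesis by blast
  qed
  show ?thesis
  proof (rule LIMSEQ_I)
    fix r :: real assume r: "0 < r"
    hence "0 < r / (M + 1)" using M0 by simp
    with small obtain N where N: "norm (P N) < r / (M + 1)" by auto
    hence N': "norm (P N) * (M + 1) < r" using M0 by (simp add: pos_less_divide_eq)
    have "\<forall>n\<ge>N. norm (blinfun_apply f (d n) - 0) < r"
    proof (intro allI impI)
      fix n assume n: "N \<le> n"
      have fd0: "0 \<le> blinfun_apply f (d n)" using fp d0 by (simp add: posf_def)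
      have "blinfun_apply f (d n) = comp_fun (z N) f (d n)"
        by (rule comp_full[OF z0 fp d0 _ dbig[OF n], symmetric]) simp
      also have "\<dots> = blinfun_apply (P N) (d n)" by (simp add: Pa d0)
      also have "\<dots> \<le> norm (P N) * norm (d n)" by (rule blinfun_le_norm)
      also have "\<dots> \<le> norm (P N) * (M + 1)" using dM[of n] by (intro mult_left_mono) auto
      finally show "norm (blinfun_apply f (d n) - 0) < r" using N' fd0 by simp
    qed
    thus "\<exists>no. \<forall>n\<ge>no. norm (blinfun_apply f (d n) - 0) < r" by blast
  qed
qed

lemma term_le_suminf:
  fixes e :: "nat \<Rightarrow> 'a::banach_lattice"
  assumes "summable e" "\<And>n. 0 \<le> e n"
  shows "e i \<le> suminf e"
proof -
  have "e i \<le> sum e {..<i} + e i" using assms(2) by (simp add: sum_nonneg add_increasing)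
  also have "\<dots> = sum e {..<Suc i}" by simp
  also have "\<dots> \<le> suminf e" by (rule psum_le_suminf[OF assms])
  finally show ?thesis .
qed

lemma pprt_lower:
  fixes a b c :: "'a::banach_lattice"
  assumes "0 \<le> c"
  shows "a - inf a b - c \<le> pprt (a - b - c)"
proof -
  have "a - inf a b = sup 0 (a - b)"
    by (simp add: diff_inf_eq_sup add_sup_distrib_left)
  moreover have "sup 0 (a - b) - c = sup (0 - c) (a - b - c)"
    by (simp only: diff_conv_add_uminus add_sup_distrib_right)
  ultimately have "a - inf a b - c = sup (0 - c) (a - b - c)" by simp
  also have "\<dots> \<le> sup 0 (a - b - c)" using assms by (intro sup_mono) auto
  also have "\<dots> = pprt (a - b - c)" by (simp add: pprt_def sup_commute)
  finally show ?thesis .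
qed

lemma sub2_le: "0 \<le> b \<Longrightarrow> 0 \<le> c \<Longrightarrow> a - b - c \<le> (a::'a::ordered_ab_group_add)"
proof -
  assume "0 \<le> b" "0 \<le> c"
  hence "0 \<le> b + c" by (rule add_nonneg_nonneg)
  hence "a \<le> a + (b + c)" by simp
  thus ?thesis by (simp only: diff_diff_eq diff_le_eq)
qed

lemma sub2_le2: "b' \<le> b \<Longrightarrow> 0 \<le> c \<Longrightarrow> a - b - c \<le> a - (b'::'a::ordered_ab_group_add)"
proof -
  assume "b' \<le> b" "0 \<le> c"
  hence "b' \<le> b + c" by (simp add: add_increasing2)
  thus ?thesis by (simp only: diff_diff_eq) (rule diff_left_mono)
qed

lemma sub2_le3: "0 \<le> b \<Longrightarrow> c' \<le> c \<Longrightarrow> a - b - c \<le> a - (c'::'a::ordered_ab_group_add)"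
proof -
  assume h: "0 \<le> b" "c' \<le> c"
  have "a - c - b \<le> a - c'" using sub2_le2[of c' c b a] h by blast
  moreover have "a - b - c = a - c - b" by (simp only: diff_diff_eq add.commute)
  ultimately show ?thesis by (simp only:)
qed

lemma not_null_freq:
  fixes X :: "nat \<Rightarrow> real"
  assumes nc: "\<not> X \<longlonglongrightarrow> 0" and X0: "\<And>n. 0 \<le> X n"
  shows "\<exists>\<delta>>0. \<forall>N. \<exists>n\<ge>N. \<delta> \<le> X n"
proof -
  have "\<not> (\<forall>r>0. \<exists>no. \<forall>n\<ge>no. norm (X n - 0) < r)"
  proof
    assume h: "\<forall>r>0. \<exists>no. \<forall>n\<ge>no. norm (X n - 0) < r"
    have "X \<longlonglongrightarrow> 0" by (rule LIMSEQ_I) (use h in blast)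
    with nc show False by contradiction
  qed
  then obtain r where r: "r > 0" "\<And>no. \<exists>n\<ge>no. \<not> norm (X n - 0) < r" by blast
  have "\<exists>n\<ge>N. r \<le> X n" for N
  proof -
    obtain n where n: "n \<ge> N" "\<not> norm (X n - 0) < r" using r(2)[of N] by blast
    hence "r \<le> X n" using X0[of n] by simp
    thus ?thesis using n(1) by blast
  qed
  thus ?thesis using r(1) by blast
qed

lemma freq_ev_ex:
  fixes X Y :: "nat \<Rightarrow> real"
  assumes "\<forall>N. \<exists>n\<ge>N. \<delta> \<le> X n" "Y \<longlonglongrightarrow> 0" "0 < c"
  shows "\<exists>n. \<delta> \<le> X n \<and> Y n < c"
proof -
  have "eventually (\<lambda>n. Y n < c) sequentially" by (rule order_tendstoD(2)[OF assms(2,3)])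
  then obtain N where N: "\<And>n. n \<ge> N \<Longrightarrow> Y n < c" unfolding eventually_sequentially by blast
  obtain n where "n \<ge> N" "\<delta> \<le> X n" using assms(1) by blast
  thus ?thesis using N by blast
qed
primrec ghS :: "('a::banach_lattice \<Rightarrow> nat) \<Rightarrow> (nat \<Rightarrow> 'a) \<Rightarrow> nat \<Rightarrow> 'a" where
  "ghS sel x 0 = 0"
| "ghS sel x (Suc k) = ghS sel x k + x (sel ((2^(k+k)) *\<^sub>R ghS sel x k))"

lemma GH:
  fixes g :: "'a::banach_lattice \<Rightarrow>\<^sub>L real" and x :: "nat \<Rightarrow> 'a"
  assumes oc: "dual_order_continuous TYPE('a)"
    and fp: "posf g"
    and x0: "\<And>n. 0 \<le> x n"
    and xM: "\<And>n. norm (x n) \<le> M"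
    and uaw: "\<And>u (F::'a \<Rightarrow>\<^sub>L real). 0 \<le> u \<Longrightarrow> (\<lambda>n. blinfun_apply F (inf (x n) u)) \<longlonglongrightarrow> 0"
  shows "(\<lambda>n. blinfun_apply g (x n)) \<longlonglongrightarrow> 0"
proof (rule ccontr)
  assume nc: "\<not> (\<lambda>n. blinfun_apply g (x n)) \<longlonglongrightarrow> 0"
  have gx0: "0 \<le> blinfun_apply g (x n)" for n using fp x0 by (simp add: posf_def)
  obtain \<delta> where \<delta>: "\<delta> > 0" and freq: "\<forall>N. \<exists>n\<ge>N. \<delta> \<le> blinfun_apply g (x n)"
    using not_null_freq[OF nc gx0] by blast
  have ex: "\<exists>n. \<delta> \<le> blinfun_apply g (x n) \<and> blinfun_apply g (inf (x n) u) < \<delta>/4" if u: "0 \<le> u" for u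
  proof (rule freq_ev_ex[OF freq])
    show "(\<lambda>n. blinfun_apply g (inf (x n) u)) \<longlonglongrightarrow> 0" by (rule uaw[OF u])
    show "0 < \<delta>/4" using \<delta> by simp
  qed
  define sel where "sel u = (SOME n. \<delta> \<le> blinfun_apply g (x n) \<and> blinfun_apply g (inf (x n) u) < \<delta>/4)" for u
  have selp: "\<delta> \<le> blinfun_apply g (x (sel u)) \<and> blinfun_apply g (inf (x (sel u)) u) < \<delta>/4" if "0 \<le> u" for u
    unfolding sel_def by (rule someI_ex[OF ex[OF that]])
  define S where "S = ghS sel x"
  define \<sigma> where "\<sigma> k = sel ((2^(k+k)) *\<^sub>R S k)" for k
  define a where "a k = x (\<sigma> k)" for k
  have Ssuc: "S (Suc k) = S k + a k" for k by (simp add: S_def \<sigma>_def a_def)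
  have Sz: "S 0 = 0" by (simp add: S_def)
  have Ssum: "S k = sum a {..<k}" for k by (induction k) (simp_all only: Ssuc Sz sum.lessThan_Suc sum.empty lessThan_0)
  have a0: "0 \<le> a k" for k by (simp add: a_def x0)
  have aM: "norm (a k) \<le> M" for k by (simp add: a_def xM)
  have S0: "0 \<le> S k" for k using a0 by (simp add: Ssum sum_nonneg)
  have M0: "0 \<le> M" using xM[of 0] norm_ge_zero[of "x 0"] by linarith
  have apk: "\<delta> \<le> blinfun_apply g (a k) \<and> blinfun_apply g (inf (a k) ((2^(k+k)) *\<^sub>R S k)) < \<delta>/4" for k
  proof -
    have "0 \<le> (2^(k+k)) *\<^sub>R S k" using S0[of k] by simp
    from selp[OF this] show ?thesis unfolding a_def \<sigma>_def .
  qed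
  have ap1: "\<delta> \<le> blinfun_apply g (a k)" for k using apk[of k] by (rule conjunct1)
  have ap2: "blinfun_apply g (inf (a k) ((2^(k+k)) *\<^sub>R S k)) < \<delta>/4" for k using apk[of k] by (rule conjunct2)
  define tt where "tt k = (\<lambda>i. ((1/2)^(i + Suc k)) *\<^sub>R a (i + Suc k))" for k
  define tl where "tl k = suminf (tt k)" for k
  have tt0: "0 \<le> tt k i" for k i by (simp add: tt_def a0)
  have ttn: "norm (tt k i) \<le> M * (1/2)^i" for k i
  proof -
    have "norm (tt k i) = (1/2)^(i + Suc k) * norm (a (i + Suc k))" by (simp add: tt_def)
    also have "\<dots> \<le> (1/2)^i * M" using aM M0
      by (intro mult_mono power_decreasing) auto
    finally show ?thesis by (simp add: mult.commute)
  qed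
  have gsum: "summable (\<lambda>i. M * (1/2::real)^i)" by (intro summable_mult summable_geometric) simp
  have tsum: "summable (tt k)" for k
    by (rule summable_comparison_test'[OF gsum]) (rule ttn)
  have t0: "0 \<le> tl k" for k
    using psum_le_suminf[OF tsum tt0, of k 0] by (simp add: tl_def)
  have tnorm: "norm (tl k) \<le> 2 * M" for k
  proof -
    have "norm (tl k) \<le> (\<Sum>i. M * (1/2::real)^i)"
      unfolding tl_def by (rule norm_suminf_le[OF ttn gsum])
    also have "(\<Sum>i. M * (1/2::real)^i) = M * 2"
      by (subst suminf_mult) (simp_all add: suminf_geometric)
    finally show ?thesis by simp
  qed
  have tbig: "((1/2)^k) *\<^sub>R a k \<le> tl j" if "j < k" for j k
  proof -
    have "tt j (k - Suc j) \<le> tl j" unfolding tl_def by (rule term_le_suminf[OF tsum tt0])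
    moreover have e: "k - Suc j + Suc j = k" using that by simp
    have "tt j (k - Suc j) = ((1/2)^k) *\<^sub>R a k" unfolding tt_def by (simp only: e)
    ultimately show ?thesis by simp
  qed
  define d where "d k = pprt (a k - (2^(k+k)) *\<^sub>R S k - ((1/2)^k) *\<^sub>R tl k)" for k
  have d0: "0 \<le> d k" for k by (simp add: d_def)
  have dle: "d k \<le> a k" for k
  proof -
    have "a k - (2^(k+k)) *\<^sub>R S k - ((1/2)^k) *\<^sub>R tl k \<le> a k" using S0[of k] t0[of k] by (intro sub2_le) simp_all
    hence "d k \<le> pprt (a k)" unfolding d_def by (rule pprt_mono)
    thus ?thesis using a0[of k] by simp
  qed
  have dM: "norm (d k) \<le> M" for k using norm_mono_pos[OF d0[of k] dle[of k]] aM[of k] by linarith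
  have dd: "inf (d j) (d k) = 0" if jk: "j < k" for j k
  proof -
    have ajS: "a j \<le> S k"
    proof -
      have "S k = a j + sum a ({..<k} - {j})" unfolding Ssum using jk by (simp add: sum.remove)
      moreover have "0 \<le> sum a ({..<k} - {j})" using a0 by (simp add: sum_nonneg)
      ultimately show ?thesis by simp
    qed
    have "(2^(k+k)) *\<^sub>R a j \<le> (2^(k+k)) *\<^sub>R S k" using ajS by (intro scaleR_left_mono) auto
    hence "a k - (2^(k+k)) *\<^sub>R S k - ((1/2)^k) *\<^sub>R tl k \<le> a k - (2^(k+k)) *\<^sub>R a j" using t0[of k] by (intro sub2_le2) simp_all
    hence dk: "d k \<le> pprt (a k - (2^(k+k)) *\<^sub>R a j)" unfolding d_def by (rule pprt_mono)
    have c0: "(1/2::real)^(k + k) \<le> (1/2)^(j + k)" using jk by (intro power_decreasing) auto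
    have c1: "(1/2::real)^(k+k) = 1 / 2^(k+k)" by (rule power_one_over)
    have c2: "(1/2::real)^(j+k) = (1/2)^j * (1/2)^k" by (rule power_add)
    have c: "1 / 2^(k+k) \<le> (1/2::real)^j * (1/2)^k" using c0 unfolding c1 c2 .
    have "(1 / 2^(k+k)) *\<^sub>R a k \<le> ((1/2)^j * (1/2)^k) *\<^sub>R a k" using c a0 by (intro scaleR_right_mono) auto
    also have "\<dots> = (1/2)^j *\<^sub>R (((1/2)^k) *\<^sub>R a k)" by simp
    also have "\<dots> \<le> (1/2)^j *\<^sub>R tl j" using tbig[OF jk] by (intro scaleR_left_mono) auto
    finally have "(1 / 2^(k+k)) *\<^sub>R a k \<le> (1/2)^j *\<^sub>R tl j" .
    hence "a j - (2^(j+j)) *\<^sub>R S j - ((1/2)^j) *\<^sub>R tl j \<le> a j - (1 / 2^(k+k)) *\<^sub>R a k" using S0[of j] by (intro sub2_le3) simp_all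
    hence dj: "d j \<le> pprt (a j - (1 / 2^(k+k)) *\<^sub>R a k)" unfolding d_def by (rule pprt_mono)
    have z: "inf (pprt (a k - (2^(k+k)) *\<^sub>R a j)) (pprt (a j - (1 / 2^(k+k)) *\<^sub>R a k)) = 0"
      by (rule disj_pprt) simp
    have "inf (d j) (d k) \<le> inf (pprt (a j - (1 / 2^(k+k)) *\<^sub>R a k)) (pprt (a k - (2^(k+k)) *\<^sub>R a j))"
      using dj dk by (rule inf_mono)
    also have "\<dots> = 0" using z by (simp add: inf_commute)
    finally have "inf (d j) (d k) \<le> 0" .
    moreover have "0 \<le> inf (d j) (d k)" using d0 by simp
    ultimately show ?thesis by simp
  qed
  have ddall: "inf (d n) (d m) = 0" if "n \<noteq> m" for n m
    using that dd[of n m] dd[of m n] by (cases "n < m") (auto simp: inf_commute)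
  have dlim: "(\<lambda>k. blinfun_apply g (d k)) \<longlonglongrightarrow> 0" by (rule DS[OF oc fp d0 ddall dM])
  define C where "C = norm g * (2 * M)"
  have lower: "\<delta> - \<delta>/4 - (1/2)^k * C \<le> blinfun_apply g (d k)" for k
  proof -
    have "a k - inf (a k) ((2^(k+k)) *\<^sub>R S k) - ((1/2)^k) *\<^sub>R tl k \<le> d k"
      unfolding d_def by (rule pprt_lower) (simp add: t0)
    hence "blinfun_apply g (a k - inf (a k) ((2^(k+k)) *\<^sub>R S k) - ((1/2)^k) *\<^sub>R tl k) \<le> blinfun_apply g (d k)"
      by (rule posf_mono[OF fp])
    hence "blinfun_apply g (a k) - blinfun_apply g (inf (a k) ((2^(k+k)) *\<^sub>R S k)) - (1/2)^k * blinfun_apply g (tl k) \<le> blinfun_apply g (d k)"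
      by (simp add: blinfun.diff_right blinfun.scaleR_right del: diff_inf_eq_sup)
    moreover have "blinfun_apply g (tl k) \<le> C"
    proof -
      have "blinfun_apply g (tl k) \<le> norm g * norm (tl k)" by (rule blinfun_le_norm)
      also have "\<dots> \<le> C" unfolding C_def using tnorm[of k] by (intro mult_left_mono) auto
      finally show ?thesis .
    qed
    hence "(1/2)^k * blinfun_apply g (tl k) \<le> (1/2)^k * C" by (intro mult_left_mono) auto
    ultimately show ?thesis using ap1[of k] ap2[of k] by linarith
  qed
  have "(\<lambda>k. (1/2::real)^k * C) \<longlonglongrightarrow> 0 * C"
    by (intro tendsto_mult LIMSEQ_power_zero tendsto_const) simp
  hence e1: "eventually (\<lambda>k. (1/2::real)^k * C < \<delta>/4) sequentially"
    using \<delta> by (intro order_tendstoD(2)) auto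
  have e2: "eventually (\<lambda>k. blinfun_apply g (d k) < \<delta>/2) sequentially"
    using \<delta> by (intro order_tendstoD(2)[OF dlim]) auto
  from eventually_conj[OF e1 e2] obtain k where
    "(1/2::real)^k * C < \<delta>/4" "blinfun_apply g (d k) < \<delta>/2"
    unfolding eventually_sequentially by auto
  thus False using lower[of k] by linarith
qed

theorem proposition2p1:
  fixes T :: "'a::banach_lattice \<Rightarrow>\<^sub>L 'b::banach"
  assumes "dual_order_continuous TYPE('a)"
    and "dunford_pettis T"
  shows "uaw_dunford_pettis T"
  unfolding uaw_dunford_pettis_def
proof (intro allI impI)
  fix x :: "nat \<Rightarrow> 'a"
  assume h: "bounded (range x) \<and> uaw_null x"
  hence "bounded (range x)" by (rule conjunct1)
  then obtain M where M0: "\<forall>y\<in>range x. norm y \<le> M" unfolding bounded_iff by blast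
  have M: "norm (x n) \<le> M" for n using M0 by blast
  have uaw: "(\<lambda>n. blinfun_apply F (inf (lmod (x n)) u)) \<longlonglongrightarrow> 0" if "0 \<le> u" for u and F :: "'a \<Rightarrow>\<^sub>L real"
  proof -
    have "uaw_null x" using h by (rule conjunct2)
    hence "weakly_null (\<lambda>n. inf (lmod (x n)) u)" using that unfolding uaw_null_def by blast
    thus ?thesis unfolding weakly_null_def by (rule spec)
  qed
  have wn: "weakly_null x"
    unfolding weakly_null_def
  proof
    fix F :: "'a \<Rightarrow>\<^sub>L real"
    obtain G where G: "posf G" "\<And>z. \<bar>blinfun_apply F z\<bar> \<le> blinfun_apply G (lmod z)"
      using dominate[of F] by blast
    have lim: "(\<lambda>n. blinfun_apply G (lmod (x n))) \<longlonglongrightarrow> 0"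
    proof (rule GH[OF assms(1) G(1)])
      show "0 \<le> lmod (x n)" for n by (rule lmod_nonneg)
      show "norm (lmod (x n)) \<le> M" for n using M[of n] norm_lmod[of "x n"] by linarith
      show "(\<lambda>n. blinfun_apply F' (inf (lmod (x n)) u)) \<longlonglongrightarrow> 0" if "0 \<le> u" for u and F' :: "'a \<Rightarrow>\<^sub>L real"
        by (rule uaw[OF that])
    qed
    have ev: "eventually (\<lambda>n. norm (blinfun_apply F (x n)) \<le> blinfun_apply G (lmod (x n))) sequentially"
    proof (intro always_eventually allI)
      fix n show "norm (blinfun_apply F (x n)) \<le> blinfun_apply G (lmod (x n))"
        unfolding real_norm_def by (rule G(2))
    qed
    show "(\<lambda>n. blinfun_apply F (x n)) \<longlonglongrightarrow> 0"
      by (rule Lim_null_comparison[OF ev lim])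
  qed
  show "(\<lambda>n. norm (blinfun_apply T (x n))) \<longlonglongrightarrow> 0"
    using assms(2) wn unfolding dunford_pettis_def by blast
qed

end
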